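(* Let $k\ge0$ be an integer and $a,b,d\in\mathbb{C}$ generic. Put $u=\tfrac34-\tfrac k2-\tfrac a2+\tfrac b2$, $v=\tfrac34-\tfrac k2-\tfrac a2-\tfrac b2$ and define the polynomial of degree $3k$ in $n$ $$Q_k^{(3')}(n;a;b;d)=\frac{1}{(u)_k(v)_k}\sum_{j=0}^k\frac{(-\tfrac n2)_j(-\tfrac n2+\tfrac12)_j(-k)_j(-n-a+d)_j}{j!\,(d)_j}\,(u-n+j)_{k-j}(v-n+j)_{k-j}.$$ Then, near $x=0$, $${}_4F_3\!\left[\begin{matrix}\tfrac a3,\ \tfrac13+\tfrac a3,\ \tfrac23+\tfrac a3,\ k+d\\ \tfrac34+\tfrac k2+\tfrac a2+\tfrac b2,\ \tfrac34+\tfrac k2+\tfrac a2-\tfrac b2,\ d\end{matrix}\,\Big|\,\frac{27x^2}{(4-x)^3}\right]=\Bigl(1-\tfrac x4\Bigr)^a\sum_{n=0}^\infty\frac{(a)_n(\tfrac14-\tfrac k2+\tfrac a2-\tfrac b2)_n(\tfrac14-\tfrac k2+\tfrac a2+\tfrac b2)_n}{n!\,(\tfrac12+k+a+b)_n(\tfrac12+k+a-b)_n}\,Q_k^{(3')}(n;a;b;d)\,x^n.$$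
   Context: $(c)_n$ denotes the Pochhammer symbol, $(c)_0=1$; ${}_pF_q$ is the generalized hypergeometric series. Parameters are assumed generic so that no lower parameter is a nonpositive integer and $(u)_k(v)_k\ne0$. *)

theory Defs
  imports "HOL-Analysis.Analysis"
begin

definition hyp_term :: "complex list \<Rightarrow> complex list \<Rightarrow> complex \<Rightarrow> nat \<Rightarrow> complex" where
  "hyp_term as bs z n =
     (\<Prod>a\<leftarrow>as. pochhammer a n) / ((\<Prod>b\<leftarrow>bs. pochhammer b n) * fact n) * z ^ n"

text \<open>The value of the series pFq (meaningful where the series converges).\<close>
definition hypF :: "complex list \<Rightarrow> complex list \<Rightarrow> complex \<Rightarrow> complex" where
  "hypF as bs z = (\<Sum>n. hyp_term as bs z n)"

definition nonpos_int :: "complex \<Rightarrow> bool" where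
  "nonpos_int c \<longleftrightarrow> (\<exists>m::nat. c = - of_nat m)"

definition u3 :: "nat \<Rightarrow> complex \<Rightarrow> complex \<Rightarrow> complex" where
  "u3 k a b = 3/4 - of_nat k / 2 - a/2 + b/2"

definition v3 :: "nat \<Rightarrow> complex \<Rightarrow> complex \<Rightarrow> complex" where
  "v3 k a b = 3/4 - of_nat k / 2 - a/2 - b/2"

definition Q3' :: "nat \<Rightarrow> nat \<Rightarrow> complex \<Rightarrow> complex \<Rightarrow> complex \<Rightarrow> complex" where
  "Q3' k n a b d =
     (let u = u3 k a b; v = v3 k a b; nn = (of_nat n :: complex) in
      1 / (pochhammer u k * pochhammer v k) *
      (\<Sum>j=0..k.
         pochhammer (- nn / 2) j * pochhammer (- nn / 2 + 1/2) j
           * pochhammer (- of_nat k) j * pochhammer (- nn - a + d) j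
           / (fact j * pochhammer d j)
         * pochhammer (u - nn + of_nat j) (k - j) * pochhammer (v - nn + of_nat j) (k - j)))"

definition rhs_coeff :: "nat \<Rightarrow> complex \<Rightarrow> complex \<Rightarrow> complex \<Rightarrow> nat \<Rightarrow> complex" where
  "rhs_coeff k a b d n =
     pochhammer a n * pochhammer (1/4 - of_nat k / 2 + a/2 - b/2) n
       * pochhammer (1/4 - of_nat k / 2 + a/2 + b/2) n
     / (fact n * pochhammer (1/2 + of_nat k + a + b) n * pochhammer (1/2 + of_nat k + a - b) n)
     * Q3' k n a b d"

end

theory Submission
  imports Defs "HOL-Analysis.Analysis"
begin


definition ff :: "complex \<Rightarrow> nat \<Rightarrow> complex" where
  "ff x j = (-1)^j * pochhammer (-x) j"

lemma ff_Suc: "ff x (Suc j) = ff x j * (x - of_nat j)"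
  by (simp add: ff_def pochhammer_Suc algebra_simps)

lemma mixed_vandermonde:
  "pochhammer (x + y) m = (\<Sum>j\<le>m. of_nat (m choose j) * ff x j * pochhammer (y + of_nat j) (m - j))"
proof (induction m arbitrary: y)
  case 0
  then show ?case by (simp add: ff_def)
next
  case (Suc n y)
  have "pochhammer (x + y) (Suc n) = (x + y) * pochhammer (x + (y + 1)) n"
    by (simp add: pochhammer_rec add_ac)
  also have "\<dots> = (\<Sum>j\<le>n. of_nat (n choose j) * ff x j * ((x + y) * pochhammer (y + 1 + of_nat j) (n - j)))"
    by (subst Suc) (simp add: sum_distrib_left mult_ac)
  also have "\<dots> = (\<Sum>j\<le>n. of_nat (n choose j) * ff x (Suc j) * pochhammer (y + of_nat (Suc j)) (n - j))
             + (\<Sum>j\<le>n. of_nat (n choose j) * ff x j * pochhammer (y + of_nat j) (Suc (n - j)))"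
    unfolding sum.distrib[symmetric]
  proof (intro sum.cong refl)
    fix j assume j: "j \<in> {..n}"
    have "(x + y) * pochhammer (y + 1 + of_nat j) (n - j)
        = (x - of_nat j) * pochhammer (y + of_nat (Suc j)) (n - j) + pochhammer (y + of_nat j) (Suc (n - j))"
      by (simp add: pochhammer_rec algebra_simps)
    then have "of_nat (n choose j) * ff x j * ((x + y) * pochhammer (y + 1 + of_nat j) (n - j)) =
         of_nat (n choose j) * ff x j * ((x - of_nat j) * pochhammer (y + of_nat (Suc j)) (n - j) + pochhammer (y + of_nat j) (Suc (n - j)))"
      by simp
    also have "\<dots> = of_nat (n choose j) * ff x (Suc j) * pochhammer (y + of_nat (Suc j)) (n - j) +
         of_nat (n choose j) * ff x j * pochhammer (y + of_nat j) (Suc (n - j))"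
      by (simp add: ff_Suc algebra_simps)
    finally show "of_nat (n choose j) * ff x j * ((x + y) * pochhammer (y + 1 + of_nat j) (n - j)) =
         of_nat (n choose j) * ff x (Suc j) * pochhammer (y + of_nat (Suc j)) (n - j) +
         of_nat (n choose j) * ff x j * pochhammer (y + of_nat j) (Suc (n - j))" .
  qed
  also have "(\<Sum>j\<le>n. of_nat (n choose j) * ff x (Suc j) * pochhammer (y + of_nat (Suc j)) (n - j))
      = (\<Sum>j\<le>Suc n. of_nat (n choose (j - 1)) * (if j = 0 then 0 else 1) * ff x j * pochhammer (y + of_nat j) (Suc n - j))"
    by (subst sum.atMost_Suc_shift) simp
  also have "(\<Sum>j\<le>n. of_nat (n choose j) * ff x j * pochhammer (y + of_nat j) (Suc (n - j)))
      = (\<Sum>j\<le>Suc n. of_nat (n choose j) * ff x j * pochhammer (y + of_nat j) (Suc n - j))"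
    by (simp add: Suc_diff_le binomial_eq_0)
  also have "(\<Sum>j\<le>Suc n. of_nat (n choose (j - 1)) * (if j = 0 then 0 else 1) * ff x j * pochhammer (y + of_nat j) (Suc n - j))
      + (\<Sum>j\<le>Suc n. of_nat (n choose j) * ff x j * pochhammer (y + of_nat j) (Suc n - j))
      = (\<Sum>j\<le>Suc n. of_nat (Suc n choose j) * ff x j * pochhammer (y + of_nat j) (Suc n - j))"
    unfolding sum.distrib[symmetric]
  proof (intro sum.cong refl)
    fix j assume "j \<in> {..Suc n}"
    show "of_nat (n choose (j - 1)) * (if j = 0 then 0 else 1) * ff x j * pochhammer (y + of_nat j) (Suc n - j) +
        of_nat (n choose j) * ff x j * pochhammer (y + of_nat j) (Suc n - j) =
        of_nat (Suc n choose j) * ff x j * pochhammer (y + of_nat j) (Suc n - j)"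
      by (cases j) (simp_all add: algebra_simps)
  qed
  finally show ?case .
qed

lemma poch_refl: "pochhammer (1 - z - of_nat L) L = (-1)^L * (pochhammer z L :: complex)"
  using pochhammer_minus'[of "-z" L] by (simp add: algebra_simps)

lemma sum_triangle_swap:
  fixes m :: nat and f :: "nat \<Rightarrow> nat \<Rightarrow> complex"
  shows "(\<Sum>j\<le>m. \<Sum>i\<le>j. f j i) = (\<Sum>i\<le>m. \<Sum>l\<le>m-i. f (i+l) i :: complex)"
proof (induction m)
  case 0 then show ?case by simp
next
  case (Suc m)
  have "(\<Sum>i\<le>Suc m. \<Sum>l\<le>Suc m-i. f (i+l) i) = (\<Sum>i\<le>m. \<Sum>l\<le>Suc m-i. f (i+l) i) + f (Suc m) (Suc m)"
    by simp
  also have "(\<Sum>i\<le>m. \<Sum>l\<le>Suc m-i. f (i+l) i) = (\<Sum>i\<le>m. (\<Sum>l\<le>m-i. f (i+l) i) + f (Suc m) i)"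
  proof (intro sum.cong refl)
    fix i assume "i \<in> {..m}"
    then have "Suc m - i = Suc (m - i)" by auto
    then show "(\<Sum>l\<le>Suc m-i. f (i+l) i) = (\<Sum>l\<le>m-i. f (i+l) i) + f (Suc m) i"
      using \<open>i \<in> {..m}\<close> by simp
  qed
  finally show ?case using Suc by (simp add: sum.distrib)
qed

lemma saal_step_a:
  fixes x y D :: complex
  assumes "j \<le> m"
  shows "pochhammer y j * pochhammer (D - x - y) (m - j) =
    (-1)^(m-j) * (\<Sum>i\<le>j. of_nat (j choose i) * (-1)^i * pochhammer (1 + x - D - of_nat m) i
        * pochhammer (1 + x + y - D - of_nat m + of_nat i) (m - i))"
proof -
  define g where "g = 1 + x + y - D - of_nat m"
  define \<alpha> where "\<alpha> = 1 + x - D - of_nat m"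
  have y: "y = -\<alpha> + g" by (simp add: g_def \<alpha>_def)
  have "pochhammer y j = (\<Sum>i\<le>j. of_nat (j choose i) * ff (-\<alpha>) i * pochhammer (g + of_nat i) (j - i))"
    unfolding y by (rule mixed_vandermonde)
  moreover have "pochhammer (D - x - y) (m - j) = (-1)^(m-j) * pochhammer (g + of_nat j) (m - j)"
  proof -
    have "g + of_nat j = 1 - (D - x - y) - of_nat (m - j)"
      using assms by (simp add: g_def of_nat_diff)
    then show ?thesis by (simp add: poch_refl)
  qed
  moreover have "pochhammer (g + of_nat i) (j - i) * pochhammer (g + of_nat j) (m - j) = pochhammer (g + of_nat i) (m - i)"
    if "i \<le> j" for i
  proof -
    have "pochhammer (g + of_nat i) ((j - i) + (m - j)) = pochhammer (g + of_nat i) (j - i) * pochhammer (g + of_nat i + of_nat (j - i)) (m - j)"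
      by (rule pochhammer_product')
    moreover have "(j - i) + (m - j) = m - i" using that assms by simp
    moreover have "g + of_nat i + of_nat (j - i) = g + of_nat j" using that by (simp add: of_nat_diff)
    ultimately show ?thesis by simp
  qed
  ultimately have "pochhammer y j * pochhammer (D - x - y) (m - j) =
      (-1)^(m-j) * (\<Sum>i\<le>j. of_nat (j choose i) * ff (-\<alpha>) i * pochhammer (g + of_nat i) (m - i))"
    by (simp add: sum_distrib_right sum_distrib_left mult_ac)
  then show ?thesis
    by (simp add: ff_def g_def \<alpha>_def mult_ac)
qed

lemma neg1_pow_diff: "l \<le> M \<Longrightarrow> ((-1)^(M - l) :: complex) = (-1)^M * (-1)^l"
proof -
  assume lM: "l \<le> M"
  have sq: "((-1)^l :: complex) * (-1)^l = 1" by (simp flip: power_mult_distrib)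
  have "((-1)^(M - l) :: complex) = (-1)^(M - l) * ((-1)^l * (-1)^l)" by (simp add: sq)
  also have "\<dots> = (-1)^(M - l + l) * (-1)^l" by (simp add: power_add mult.assoc)
  also have "M - l + l = M" using lM by simp
  finally show ?thesis .
qed

lemma saalP:
  fixes x y D :: complex
  shows "(\<Sum>j\<le>m. of_nat (m choose j) * pochhammer x j * pochhammer y j
      * pochhammer (D + of_nat j) (m - j) * pochhammer (D - x - y) (m - j))
    = pochhammer (D - x) m * pochhammer (D - y) m"
proof -
  define g where "g = 1 + x + y - D - of_nat m"
  define \<alpha> where "\<alpha> = 1 + x - D - of_nat m"
  define F where "F = (\<lambda>j i. of_nat (m choose j) * of_nat (j choose i) * pochhammer x j * pochhammer (D + of_nat j) (m - j)
     * (-1)^(m-j) * (-1)^i * pochhammer \<alpha> i * pochhammer (g + of_nat i) (m - i))"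
  have "(\<Sum>j\<le>m. of_nat (m choose j) * pochhammer x j * pochhammer y j
      * pochhammer (D + of_nat j) (m - j) * pochhammer (D - x - y) (m - j)) = (\<Sum>j\<le>m. \<Sum>i\<le>j. F j i)"
  proof (intro sum.cong refl)
    fix j assume "j \<in> {..m}"
    then have "pochhammer y j * pochhammer (D - x - y) (m - j) =
    (-1)^(m-j) * (\<Sum>i\<le>j. of_nat (j choose i) * (-1)^i * pochhammer \<alpha> i
        * pochhammer (g + of_nat i) (m - i))"
      using saal_step_a[of j m y D x] by (simp add: g_def \<alpha>_def)
    note eq = this
    show "of_nat (m choose j) * pochhammer x j * pochhammer y j
      * pochhammer (D + of_nat j) (m - j) * pochhammer (D - x - y) (m - j) = (\<Sum>i\<le>j. F j i)"
    proof -
      have "of_nat (m choose j) * pochhammer x j * pochhammer y j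
      * pochhammer (D + of_nat j) (m - j) * pochhammer (D - x - y) (m - j) =
        (of_nat (m choose j) * pochhammer x j * pochhammer (D + of_nat j) (m - j)) * (pochhammer y j * pochhammer (D - x - y) (m - j))"
        by (simp add: mult_ac)
      also note eq
      finally show ?thesis unfolding F_def by (simp add: sum_distrib_left mult_ac)
    qed
  qed
  also have "\<dots> = (\<Sum>i\<le>m. \<Sum>l\<le>m-i. F (i+l) i)" by (rule sum_triangle_swap)
  also have "\<dots> = (\<Sum>i\<le>m. of_nat (m choose i) * pochhammer x i * pochhammer (D - x) m * pochhammer (D - x - y) (m - i))"
  proof (intro sum.cong refl)
    fix i assume i: "i \<in> {..m}"
    define M where "M = m - i"
    have inner: "(\<Sum>l\<le>M. of_nat (M choose l) * pochhammer (x + of_nat i) l * pochhammer (D + of_nat i + of_nat l) (M - l) * (-1)^(M-l))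
        = (-1)^M * pochhammer (D - x) M"
    proof -
      have "pochhammer (-(x + of_nat i) + (D + of_nat i)) M = (\<Sum>l\<le>M. of_nat (M choose l) * ff (-(x + of_nat i)) l * pochhammer (D + of_nat i + of_nat l) (M - l))"
        by (rule mixed_vandermonde)
      then have "(-1)^M * pochhammer (D - x) M = (\<Sum>l\<le>M. (-1)^M * (of_nat (M choose l) * ff (-(x + of_nat i)) l * pochhammer (D + of_nat i + of_nat l) (M - l)))"
        by (simp add: sum_distrib_left)
      also have "\<dots> = (\<Sum>l\<le>M. of_nat (M choose l) * pochhammer (x + of_nat i) l * pochhammer (D + of_nat i + of_nat l) (M - l) * (-1)^(M-l))"
        by (intro sum.cong refl) (simp add: ff_def neg1_pow_diff mult_ac add.commute)
      finally show ?thesis by simp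
    qed
    have "(\<Sum>l\<le>m-i. F (i+l) i) = (\<Sum>l\<le>M. (of_nat (m choose i) * pochhammer x i * (-1)^i * pochhammer \<alpha> i * pochhammer (g + of_nat i) (m - i))
         * (of_nat (M choose l) * pochhammer (x + of_nat i) l * pochhammer (D + of_nat i + of_nat l) (M - l) * (-1)^(M-l)))"
    proof (intro sum.cong, simp add: M_def)
      fix l assume l: "l \<in> {..M}"
      have c: "(m choose (i+l)) * ((i+l) choose i) = (m choose i) * (M choose l)"
        using choose_mult[of i "i+l" m] l i by (simp add: M_def)
      have c': "of_nat (m choose (i+l)) * of_nat ((i+l) choose i) = (of_nat (m choose i) * of_nat (M choose l) :: complex)"
        using arg_cong[OF c, of of_nat] by simp
      have p: "pochhammer x (i + l) = pochhammer x i * pochhammer (x + of_nat i) l"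
        by (rule pochhammer_product')
      have e: "m - (i + l) = M - l" by (simp add: M_def)
      show "F (i + l) i = (of_nat (m choose i) * pochhammer x i * (-1)^i * pochhammer \<alpha> i * pochhammer (g + of_nat i) (m - i))
         * (of_nat (M choose l) * pochhammer (x + of_nat i) l * pochhammer (D + of_nat i + of_nat l) (M - l) * (-1)^(M-l))"
        unfolding F_def e p
        apply (simp add: mult_ac add_ac) using c' by (simp add: mult.commute)
    qed
    also have "\<dots> = (of_nat (m choose i) * pochhammer x i * (-1)^i * pochhammer \<alpha> i * pochhammer (g + of_nat i) (m - i))
        * ((-1)^M * pochhammer (D - x) M)"
      by (simp add: sum_distrib_left inner flip: inner)
    also have "\<dots> = of_nat (m choose i) * pochhammer x i * pochhammer (D - x) m * pochhammer (D - x - y) (m - i)"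
    proof -
      have im: "i \<le> m" using i by simp
      have a1: "pochhammer \<alpha> i = (-1)^i * pochhammer (D - x + of_nat M) i"
      proof -
        have "\<alpha> = 1 - (D - x + of_nat M) - of_nat i" using im by (simp add: \<alpha>_def M_def of_nat_diff)
        then show ?thesis by (simp add: poch_refl)
      qed
      have a2: "pochhammer (D - x) M * pochhammer (D - x + of_nat M) i = pochhammer (D - x) m"
        using pochhammer_product'[of "D - x" M i] im by (simp add: M_def)
      have a3: "pochhammer (g + of_nat i) (m - i) = (-1)^M * pochhammer (D - x - y) M"
      proof -
        have "g + of_nat i = 1 - (D - x - y) - of_nat M" using im by (simp add: g_def M_def of_nat_diff)
        then show ?thesis by (simp add: poch_refl M_def)
      qed
      have sq: "\<And>n. ((-1)^n :: complex) * (-1)^n = 1" by (simp flip: power_add)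
      show ?thesis
        unfolding a1 a3 using a2[symmetric]
        by (simp add: M_def)
    qed
    finally show "(\<Sum>l\<le>m-i. F (i+l) i) = of_nat (m choose i) * pochhammer x i * pochhammer (D - x) m * pochhammer (D - x - y) (m - i)" .
  qed
  also have "\<dots> = pochhammer (D - x) m * (\<Sum>i\<le>m. of_nat (m choose i) * pochhammer x i * pochhammer (D - x - y) (m - i))"
    by (simp add: sum_distrib_left mult_ac)
  also have "(\<Sum>i\<le>m. of_nat (m choose i) * pochhammer x i * pochhammer (D - x - y) (m - i)) = pochhammer (x + (D - x - y)) m"
    by (rule pochhammer_binomial_sum[symmetric])
  finally show ?thesis by simp
qed

lemma poch_negnat_fact:
  "pochhammer (- of_nat M :: complex) i / fact i = (-1)^i * of_nat (M choose i)"
proof -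
  have "(of_nat M gchoose i :: complex) = (-1)^i * pochhammer (- of_nat M) i / fact i"
    by (rule gbinomial_pochhammer)
  then have "(-1)^i * (of_nat M gchoose i :: complex) = ((-1)^i * (-1)^i) * pochhammer (- of_nat M) i / fact i"
    by (simp add: mult_ac)
  also have "((-1)^i * (-1)^i :: complex) = 1" by (simp flip: power_mult_distrib)
  finally show ?thesis by (simp add: binomial_gbinomial)
qed

lemma poch_split_nz:
  fixes B :: complex
  assumes "pochhammer B N \<noteq> 0" "j \<le> N"
  shows "pochhammer B j \<noteq> 0" "pochhammer (B + of_nat j) (N - j) \<noteq> 0"
    "pochhammer B N = pochhammer B j * pochhammer (B + of_nat j) (N - j)"
proof -
  show e: "pochhammer B N = pochhammer B j * pochhammer (B + of_nat j) (N - j)"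
    by (rule pochhammer_product[OF assms(2)])
  show "pochhammer B j \<noteq> 0" "pochhammer (B + of_nat j) (N - j) \<noteq> 0"
    using assms(1) unfolding e by auto
qed

lemma saal_terminating:
  fixes A B C E :: complex
  assumes bal: "C + E = 1 - of_nat M + A + B"
    and nz: "pochhammer C M \<noteq> 0" "pochhammer E M \<noteq> 0"
  shows "(\<Sum>i\<le>M. pochhammer (- of_nat M) i * pochhammer A i * pochhammer B i
          / (fact i * pochhammer C i * pochhammer E i))
       = (-1)^M * pochhammer (C - A) M * pochhammer (C - B) M / (pochhammer C M * pochhammer E M)"
proof -
  have "(\<Sum>i\<le>M. pochhammer (- of_nat M) i * pochhammer A i * pochhammer B i
          / (fact i * pochhammer C i * pochhammer E i)) * (pochhammer C M * pochhammer E M)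
    = (\<Sum>i\<le>M. (-1)^M * (of_nat (M choose i) * pochhammer A i * pochhammer B i
         * pochhammer (C + of_nat i) (M - i) * pochhammer (C - A - B) (M - i)))"
    unfolding sum_distrib_right
  proof (intro sum.cong refl)
    fix i assume i: "i \<in> {..M}"
    then have iM: "i \<le> M" by simp
    note sC = poch_split_nz[OF nz(1) iM] and sE = poch_split_nz[OF nz(2) iM]
    have r: "pochhammer (E + of_nat i) (M - i) = (-1)^(M-i) * pochhammer (C - A - B) (M - i)"
    proof -
      have "E + of_nat i = 1 - (C - A - B) - of_nat (M - i)"
        using bal iM by (simp add: of_nat_diff algebra_simps)
      then show ?thesis by (simp add: poch_refl)
    qed
    have f: "pochhammer (- of_nat M :: complex) i / fact i = (-1)^i * of_nat (M choose i)"
      by (rule poch_negnat_fact)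
    have "pochhammer (- of_nat M) i * pochhammer A i * pochhammer B i
          / (fact i * pochhammer C i * pochhammer E i) * (pochhammer C M * pochhammer E M)
        = (pochhammer (- of_nat M) i / fact i) * pochhammer A i * pochhammer B i
          * pochhammer (C + of_nat i) (M - i) * pochhammer (E + of_nat i) (M - i)"
      using sC sE by (simp add: field_simps)
    also have "\<dots> = (-1)^i * (-1)^(M-i) * (of_nat (M choose i) * pochhammer A i * pochhammer B i
         * pochhammer (C + of_nat i) (M - i) * pochhammer (C - A - B) (M - i))"
      unfolding f r by (simp add: mult_ac)
    also have "(-1)^i * (-1)^(M-i) = ((-1)^M :: complex)"
      using iM by (simp flip: power_add)
    finally show "pochhammer (- of_nat M) i * pochhammer A i * pochhammer B i
          / (fact i * pochhammer C i * pochhammer E i) * (pochhammer C M * pochhammer E M) =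
         (-1)^M * (of_nat (M choose i) * pochhammer A i * pochhammer B i
         * pochhammer (C + of_nat i) (M - i) * pochhammer (C - A - B) (M - i))" .
  qed
  also have "\<dots> = (-1)^M * pochhammer (C - A) M * pochhammer (C - B) M"
    using saalP[of M A B C] by (simp add: sum_distrib_left[symmetric] mult.assoc)
  finally show ?thesis using nz by (simp add: field_simps)
qed

lemma sears_like:
  fixes A2 A3 B1 B2 d :: complex and N k :: nat
  assumes bal: "B1 + B2 = 1 - of_nat N + A2 + A3 + of_nat k"
    and nz1: "pochhammer B1 N \<noteq> 0" and nz2: "pochhammer B2 N \<noteq> 0" and nzd: "pochhammer d N \<noteq> 0"
  shows "(\<Sum>m\<le>N. pochhammer (- of_nat N) m * pochhammer A2 m * pochhammer A3 m * pochhammer (d + of_nat k) m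
            / (fact m * pochhammer B1 m * pochhammer B2 m * pochhammer d m))
    = (\<Sum>j\<le>N. pochhammer (- of_nat k) j * pochhammer (d - A3) j * pochhammer (- of_nat N) j * pochhammer A2 j
            / (fact j * pochhammer d j)
         * ((-1)^(N-j) * pochhammer (B1 - A2) (N-j) * pochhammer (B1 - A3 - of_nat k + of_nat j) (N-j)
            / (pochhammer B1 N * pochhammer B2 N)))"
proof -
  define H where "H = (\<lambda>m j. pochhammer (- of_nat N) m * pochhammer A2 m * of_nat (m choose j)
      * pochhammer (- of_nat k) j * pochhammer (d - A3) j * pochhammer (A3 + of_nat k) (m - j)
      / (fact m * pochhammer B1 m * pochhammer B2 m * pochhammer d j) :: complex)"
  have "(\<Sum>m\<le>N. pochhammer (- of_nat N) m * pochhammer A2 m * pochhammer A3 m * pochhammer (d + of_nat k) m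
            / (fact m * pochhammer B1 m * pochhammer B2 m * pochhammer d m)) = (\<Sum>m\<le>N. \<Sum>j\<le>m. H m j)"
  proof (intro sum.cong refl)
    fix m assume "m \<in> {..N}"
    then have mN: "m \<le> N" by simp
    have dm: "pochhammer d m \<noteq> 0" using poch_split_nz(1)[OF nzd mN] .
    have s: "(\<Sum>j\<le>m. of_nat (m choose j) * pochhammer (- of_nat k) j * pochhammer (d - A3) j
      * pochhammer (d + of_nat j) (m - j) * pochhammer (A3 + of_nat k) (m - j))
      = pochhammer (d + of_nat k) m * pochhammer A3 m"
      using saalP[of m "- of_nat k" "d - A3" d] by (simp add: algebra_simps)
    have "(\<Sum>j\<le>m. H m j) = pochhammer (- of_nat N) m * pochhammer A2 m / (fact m * pochhammer B1 m * pochhammer B2 m * pochhammer d m)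
        * (\<Sum>j\<le>m. of_nat (m choose j) * pochhammer (- of_nat k) j * pochhammer (d - A3) j
      * pochhammer (d + of_nat j) (m - j) * pochhammer (A3 + of_nat k) (m - j))"
      unfolding sum_distrib_left H_def
    proof (intro sum.cong refl)
      fix j assume "j \<in> {..m}"
      then have jm: "j \<le> m" by simp
      note sd = poch_split_nz[OF dm jm]
      show "pochhammer (- of_nat N) m * pochhammer A2 m * of_nat (m choose j)
      * pochhammer (- of_nat k) j * pochhammer (d - A3) j * pochhammer (A3 + of_nat k) (m - j)
      / (fact m * pochhammer B1 m * pochhammer B2 m * pochhammer d j) =
        pochhammer (- of_nat N) m * pochhammer A2 m / (fact m * pochhammer B1 m * pochhammer B2 m * pochhammer d m) *
        (of_nat (m choose j) * pochhammer (- of_nat k) j * pochhammer (d - A3) j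
      * pochhammer (d + of_nat j) (m - j) * pochhammer (A3 + of_nat k) (m - j))"
        unfolding sd(3) using sd(1,2) by (simp add: field_simps)
    qed
    also note s
    finally show "pochhammer (- of_nat N) m * pochhammer A2 m * pochhammer A3 m * pochhammer (d + of_nat k) m
            / (fact m * pochhammer B1 m * pochhammer B2 m * pochhammer d m) = (\<Sum>j\<le>m. H m j)"
      by (simp add: field_simps)
  qed
  also have "\<dots> = (\<Sum>j\<le>N. \<Sum>i\<le>N-j. H (j+i) j)" by (rule sum_triangle_swap)
  also have "\<dots> = (\<Sum>j\<le>N. pochhammer (- of_nat k) j * pochhammer (d - A3) j * pochhammer (- of_nat N) j * pochhammer A2 j
            / (fact j * pochhammer d j)
         * ((-1)^(N-j) * pochhammer (B1 - A2) (N-j) * pochhammer (B1 - A3 - of_nat k + of_nat j) (N-j)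
            / (pochhammer B1 N * pochhammer B2 N)))"
  proof (intro sum.cong refl)
    fix j assume "j \<in> {..N}"
    then have jN: "j \<le> N" by simp
    define M where "M = N - j"
    note s1 = poch_split_nz[OF nz1 jN] and s2 = poch_split_nz[OF nz2 jN] and s3 = poch_split_nz[OF nzd jN]
    define X where "X = pochhammer (- of_nat k) j * pochhammer (d - A3) j * pochhammer (- of_nat N) j * pochhammer A2 j
      / (fact j * pochhammer d j * pochhammer B1 j * pochhammer B2 j)"
    have HX: "H (j+i) j = X * (pochhammer (- of_nat M) i * pochhammer (A2 + of_nat j) i * pochhammer (A3 + of_nat k) i
          / (fact i * pochhammer (B1 + of_nat j) i * pochhammer (B2 + of_nat j) i))" if "i \<le> N - j" for i
    proof -
      have nzB1: "pochhammer B1 (j+i) \<noteq> 0" using poch_split_nz(1)[OF nz1, of "j+i"] that jN by simp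
      have nzB2: "pochhammer B2 (j+i) \<noteq> 0" using poch_split_nz(1)[OF nz2, of "j+i"] that jN by simp
      have f: "of_nat ((j+i) choose j) / fact (j+i) = (1 / (fact j * fact i) :: complex)"
        by (simp add: binomial_fact)
      have p1: "pochhammer (- of_nat N :: complex) (j+i) = pochhammer (- of_nat N) j * pochhammer (- of_nat M) i"
        using pochhammer_product'[of "- of_nat N :: complex" j i] jN by (simp add: M_def of_nat_diff)
      have p2: "pochhammer A2 (j+i) = pochhammer A2 j * pochhammer (A2 + of_nat j) i"
        by (rule pochhammer_product')
      have p3: "pochhammer B1 (j+i) = pochhammer B1 j * pochhammer (B1 + of_nat j) i"
        by (rule pochhammer_product')
      have p4: "pochhammer B2 (j+i) = pochhammer B2 j * pochhammer (B2 + of_nat j) i"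
        by (rule pochhammer_product')
      have "H (j+i) j = (of_nat ((j+i) choose j) / fact (j+i)) * pochhammer (- of_nat N) (j+i) * pochhammer A2 (j+i)
      * pochhammer (- of_nat k) j * pochhammer (d - A3) j * pochhammer (A3 + of_nat k) i
      / (pochhammer B1 (j+i) * pochhammer B2 (j+i) * pochhammer d j)"
        unfolding H_def by (simp add: mult_ac)
      also have "\<dots> = X * (pochhammer (- of_nat M) i * pochhammer (A2 + of_nat j) i * pochhammer (A3 + of_nat k) i
          / (fact i * pochhammer (B1 + of_nat j) i * pochhammer (B2 + of_nat j) i))"
        using nzB1 nzB2 s3(1) unfolding f p1 p2 X_def unfolding p3 p4 by (simp add: field_simps)
      finally show ?thesis .
    qed
    have "(\<Sum>i\<le>N-j. H (j+i) j) = X * (\<Sum>i\<le>M. pochhammer (- of_nat M) i * pochhammer (A2 + of_nat j) i * pochhammer (A3 + of_nat k) i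
          / (fact i * pochhammer (B1 + of_nat j) i * pochhammer (B2 + of_nat j) i))"
      unfolding sum_distrib_left M_def by (intro sum.cong refl) (simp add: HX M_def)
    also have "(\<Sum>i\<le>M. pochhammer (- of_nat M) i * pochhammer (A2 + of_nat j) i * pochhammer (A3 + of_nat k) i
          / (fact i * pochhammer (B1 + of_nat j) i * pochhammer (B2 + of_nat j) i))
       = (-1)^M * pochhammer (B1 + of_nat j - (A2 + of_nat j)) M * pochhammer (B1 + of_nat j - (A3 + of_nat k)) M
          / (pochhammer (B1 + of_nat j) M * pochhammer (B2 + of_nat j) M)"
      apply (rule saal_terminating)
      using bal jN s1(2) s2(2) by (simp_all add: M_def of_nat_diff algebra_simps)
    finally show "(\<Sum>i\<le>N-j. H (j+i) j) = pochhammer (- of_nat k) j * pochhammer (d - A3) j * pochhammer (- of_nat N) j * pochhammer A2 j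
            / (fact j * pochhammer d j)
         * ((-1)^(N-j) * pochhammer (B1 - A2) (N-j) * pochhammer (B1 - A3 - of_nat k + of_nat j) (N-j)
            / (pochhammer B1 N * pochhammer B2 N))"
      unfolding X_def s1(3) s2(3) using s1(1,2) s2(1,2) s3(1) by (simp add: M_def field_simps)
  qed
  finally show ?thesis .
qed


lemma key_identity:
  fixes w q :: complex
  assumes "N + L = n" "j \<le> N" "j \<le> k"
  shows "(-1)^(N-j) * pochhammer (w + of_nat k + of_nat L) (N-j) * pochhammer (1 - q - of_nat k - of_nat n + of_nat j) (N-j)
     * pochhammer (w + of_nat k) L * pochhammer (q + of_nat k) L * pochhammer (1 - q - of_nat k) k * pochhammer (1 - w - of_nat k) k
   = pochhammer q n * pochhammer w n * pochhammer (1 - q - of_nat k - of_nat n + of_nat j) (k-j)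
     * pochhammer (1 - w - of_nat k - of_nat n + of_nat j) (k-j)"
proof -
  have r1: "pochhammer (1 - q - of_nat k - of_nat n + of_nat j) (N-j) = (-1)^(N-j) * pochhammer (q + of_nat k + of_nat L) (N-j)"
  proof -
    have "1 - q - of_nat k - of_nat n + of_nat j = 1 - (q + of_nat k + of_nat L) - of_nat (N - j)"
    proof -
      have "(of_nat n :: complex) = of_nat N + of_nat L" by (simp add: assms(1)[symmetric])
      moreover have "(of_nat (N - j) :: complex) = of_nat N - of_nat j" using assms(2) by (simp add: of_nat_diff)
      ultimately show ?thesis by (simp add: algebra_simps)
    qed
    then show ?thesis by (simp only: poch_refl)
  qed
  have r2: "pochhammer (1 - q - of_nat k) k = (-1)^k * pochhammer q k"
    using poch_refl[of q k] by (simp add: algebra_simps)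
  have r3: "pochhammer (1 - w - of_nat k) k = (-1)^k * pochhammer w k"
    using poch_refl[of w k] by (simp add: algebra_simps)
  have r4: "pochhammer (1 - q - of_nat k - of_nat n + of_nat j) (k-j) = (-1)^(k-j) * pochhammer (q + of_nat n) (k-j)"
  proof -
    have "1 - q - of_nat k - of_nat n + of_nat j = 1 - (q + of_nat n) - of_nat (k - j)"
      using assms by (simp add: of_nat_diff)
    then show ?thesis by (simp only: poch_refl)
  qed
  have r5: "pochhammer (1 - w - of_nat k - of_nat n + of_nat j) (k-j) = (-1)^(k-j) * pochhammer (w + of_nat n) (k-j)"
  proof -
    have "1 - w - of_nat k - of_nat n + of_nat j = 1 - (w + of_nat n) - of_nat (k - j)"
      using assms by (simp add: of_nat_diff)
    then show ?thesis by (simp only: poch_refl)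
  qed
  have pw: "pochhammer w k * pochhammer (w + of_nat k) L * pochhammer (w + of_nat k + of_nat L) (N-j) = pochhammer w (k + L + (N - j))"
    by (simp add: pochhammer_product' mult.assoc add.assoc)
  have pq: "pochhammer q k * pochhammer (q + of_nat k) L * pochhammer (q + of_nat k + of_nat L) (N-j) = pochhammer q (k + L + (N - j))"
    by (simp add: pochhammer_product' mult.assoc add.assoc)
  have pw2: "pochhammer w n * pochhammer (w + of_nat n) (k-j) = pochhammer w (n + (k - j))"
    by (simp add: pochhammer_product')
  have pq2: "pochhammer q n * pochhammer (q + of_nat n) (k-j) = pochhammer q (n + (k - j))"
    by (simp add: pochhammer_product')
  have e: "k + L + (N - j) = n + (k - j)" using assms by simp
  have sq: "\<And>i. ((-1)^i :: complex) * (-1)^i = 1" by (simp flip: power_mult_distrib)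
  have "(-1)^(N-j) * pochhammer (w + of_nat k + of_nat L) (N-j) * pochhammer (1 - q - of_nat k - of_nat n + of_nat j) (N-j)
     * pochhammer (w + of_nat k) L * pochhammer (q + of_nat k) L * pochhammer (1 - q - of_nat k) k * pochhammer (1 - w - of_nat k) k
     = ((-1)^(N-j) * (-1)^(N-j)) * ((-1)^k * (-1)^k) * (pochhammer w k * pochhammer (w + of_nat k) L * pochhammer (w + of_nat k + of_nat L) (N-j))
       * (pochhammer q k * pochhammer (q + of_nat k) L * pochhammer (q + of_nat k + of_nat L) (N-j))"
    unfolding r1 r2 r3 by (simp add: mult_ac)
  also have "\<dots> = pochhammer w (n + (k - j)) * pochhammer q (n + (k - j))"
    unfolding pw pq sq e by simp
  also have "\<dots> = ((-1)^(k-j) * (-1)^(k-j)) * ((-1)^(k-j) * (-1)^(k-j)) * (pochhammer q n * pochhammer (q + of_nat n) (k-j)) * (pochhammer w n * pochhammer (w + of_nat n) (k-j))"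
    unfolding sq pq2 pw2 by simp
  also have "\<dots> = pochhammer q n * pochhammer w n * pochhammer (1 - q - of_nat k - of_nat n + of_nat j) (k-j)
     * pochhammer (1 - w - of_nat k - of_nat n + of_nat j) (k-j)"
    unfolding r4 r5 by (simp add: mult_ac)
  finally show ?thesis .
qed


lemma poch_dup_gen:
  fixes z :: complex
  shows "pochhammer (2 * z) n = 2^n * pochhammer z (n - n div 2) * pochhammer (z + 1/2) (n div 2)"
proof (cases "even n")
  case True
  define N where "N = n div 2"
  have n: "n = 2 * N" using True unfolding N_def by presburger
  have "pochhammer (2 * z) (2 * N) = of_nat (2^(2*N)) * pochhammer z N * pochhammer (z+1/2) N"
    by (rule pochhammer_double)
  moreover have "n - n div 2 = N" "n div 2 = N" using n by simp_all
  ultimately show ?thesis by (simp add: n)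
next
  case False
  define N where "N = n div 2"
  have n: "n = Suc (2 * N)" using False unfolding N_def by presburger
  have d: "n div 2 = N" "n - N = Suc N" using n by simp_all
  have "pochhammer (2 * z) n = pochhammer (2 * z) (2 * N) * (2 * z + of_nat (2 * N))"
    by (simp add: n pochhammer_Suc)
  also have "\<dots> = of_nat (2^(2*N)) * pochhammer z N * pochhammer (z + 1/2) N * (2 * (z + of_nat N))"
    using pochhammer_double[of z N] by (simp add: algebra_simps)
  also have "\<dots> = 2^n * pochhammer z (Suc N) * pochhammer (z + 1/2) N"
    by (simp add: n pochhammer_Suc)
  finally show ?thesis unfolding d .
qed

lemma poch_triple:
  fixes a :: complex
  shows "pochhammer (a/3) m * pochhammer (1/3 + a/3) m * pochhammer (2/3 + a/3) m * 27^m = pochhammer a (3*m)"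
proof (induction m)
  case 0 then show ?case by simp
next
  case (Suc m)
  have "pochhammer a (3 * Suc m) = pochhammer a (3*m) * ((a + of_nat (3*m)) * (a + of_nat (3*m) + 1) * (a + of_nat (3*m) + 2))"
    by (simp add: pochhammer_Suc numeral_3_eq_3 algebra_simps)
  then show ?case using Suc by (simp add: pochhammer_Suc algebra_simps)
qed


lemma poch_half_pair:
  fixes n :: nat
  shows "pochhammer (- of_nat n / 2 :: complex) m * pochhammer (- of_nat n / 2 + 1/2) m
       = pochhammer (- of_nat (n div 2)) m * pochhammer (1/2 - of_nat (n - n div 2)) m"
proof (cases "even n")
  case True
  define N where "N = n div 2"
  have n: "n = 2 * N" using True unfolding N_def by presburger
  have e1: "- of_nat n / 2 = (- of_nat (n div 2) :: complex)" by (simp add: n)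
  have e2: "- of_nat (n div 2) + 1/2 = (1/2 - of_nat (n - n div 2) :: complex)" by (simp add: n)
  show ?thesis unfolding e1 e2 by (rule refl)
next
  case False
  define N where "N = n div 2"
  have n: "n = Suc (2 * N)" using False unfolding N_def by presburger
  have d1: "n div 2 = N" "n - N = N + 1" using n by simp_all
  have on: "(of_nat n :: complex) = 2 * of_nat N + 1" using n by simp
  have g1: "\<And>x::complex. - (2 * x + 1) / 2 = 1/2 - (x + 1)" by (simp add: field_simps)
  have g2: "\<And>x::complex. - (2 * x + 1) / 2 + 1/2 = - x" by (simp add: field_simps)
  have e1: "- of_nat n / 2 = (1/2 - of_nat (n - n div 2) :: complex)" unfolding on d1 using g1 by simp
  have e2: "- of_nat n / 2 + 1/2 = (- of_nat (n div 2) :: complex)" unfolding on d1 using g2 by simp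
  show ?thesis by (subst e2, subst e1, simp add: mult.commute)
qed


definition cm :: "nat \<Rightarrow> complex \<Rightarrow> complex \<Rightarrow> complex \<Rightarrow> nat \<Rightarrow> complex" where
  "cm k a b d m = pochhammer (a/3) m * pochhammer (1/3 + a/3) m * pochhammer (2/3 + a/3) m
     * pochhammer (of_nat k + d) m
     / (pochhammer (3/4 + of_nat k / 2 + a/2 + b/2) m * pochhammer (3/4 + of_nat k / 2 + a/2 - b/2) m
        * pochhammer d m * fact m)"

lemma nonpos_int_poch: "\<not> nonpos_int c \<Longrightarrow> pochhammer c n \<noteq> 0"
  by (auto simp: nonpos_int_def pochhammer_eq_0_iff)

lemma coeff_term:
  fixes a b d :: complex
  assumes "2 * m \<le> n"
  shows "cm k a b d m * (27/64)^m * (pochhammer (of_nat (3*m) + a) (n - 2*m) / fact (n - 2*m) / 4^(n - 2*m))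
    = pochhammer a n / (fact n * 4^n) *
      (pochhammer (- of_nat n / 2) m * pochhammer (- of_nat n / 2 + 1/2) m * pochhammer (a + of_nat n) m
        * pochhammer (of_nat k + d) m
       / (fact m * pochhammer (3/4 + of_nat k / 2 + a/2 + b/2) m * pochhammer (3/4 + of_nat k / 2 + a/2 - b/2) m
        * pochhammer d m))"
proof -
  have t: "pochhammer (a/3) m * pochhammer (1/3 + a/3) m * pochhammer (2/3 + a/3) m = pochhammer a (3*m) / 27^m"
    using poch_triple[of a m] by (simp add: field_simps)
  have p1: "pochhammer a (3*m) * pochhammer (of_nat (3*m) + a) (n - 2*m) = pochhammer a n * pochhammer (a + of_nat n) m"
  proof -
    have "pochhammer a (3*m) * pochhammer (of_nat (3*m) + a) (n - 2*m) = pochhammer a (3*m + (n - 2*m))"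
      by (simp add: pochhammer_product' add.commute)
    also have "3*m + (n - 2*m) = n + m" using assms by simp
    also have "pochhammer a (n + m) = pochhammer a n * pochhammer (a + of_nat n) m"
      by (rule pochhammer_product')
    finally show ?thesis .
  qed
  have f: "1 / fact (n - 2*m) = pochhammer (- of_nat n :: complex) (2*m) / fact n"
  proof -
    have "pochhammer (- of_nat n :: complex) (2*m) / fact (2*m) = (-1)^(2*m) * of_nat (n choose (2*m))"
      by (rule poch_negnat_fact)
    also have "\<dots> = fact n / (fact (2*m) * fact (n - 2*m))"
      using assms by (simp add: binomial_fact power_mult)
    finally have "pochhammer (- of_nat n :: complex) (2*m) = fact n / fact (n - 2*m)"
      by (simp add: field_simps)
    then show ?thesis by (simp add: field_simps)
  qed
  have dup: "pochhammer (- of_nat n :: complex) (2*m) = 4^m * pochhammer (- of_nat n / 2) m * pochhammer (- of_nat n / 2 + 1/2) m"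
    using pochhammer_double[of "- of_nat n / 2 :: complex" m] by (simp add: power_mult)
  have p4: "(4::complex)^(n - 2*m) * 4^m * 4^m = 4^n"
  proof -
    have "(4::complex)^(n - 2*m) * 4^m * 4^m = 4^(n - 2*m + m + m)" by (simp add: power_add)
    also have "n - 2*m + m + m = n" using assms by simp
    finally show ?thesis .
  qed
  define Pk where "Pk = pochhammer (of_nat k + d) m"
  define Bs where "Bs = pochhammer (3/4 + of_nat k / 2 + a/2 + b/2) m * pochhammer (3/4 + of_nat k / 2 + a/2 - b/2) m
        * pochhammer d m * fact m"
  define H where "H = pochhammer (- of_nat n / 2 :: complex) m * pochhammer (- of_nat n / 2 + 1/2) m"
  have fH: "1 / fact (n - 2*m) = 4^m * H / fact n" unfolding f dup H_def by (simp add: mult_ac)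
  have "cm k a b d m * (27/64)^m * (pochhammer (of_nat (3*m) + a) (n - 2*m) / fact (n - 2*m) / 4^(n - 2*m))
     = Pk / Bs * (pochhammer a (3*m) * pochhammer (of_nat (3*m) + a) (n - 2*m)) * (1 / fact (n - 2*m))
       * ((27/64)^m / 27^m / 4^(n - 2*m))"
    unfolding cm_def t Pk_def Bs_def by (simp add: field_simps)
  also have "\<dots> = Pk / Bs * (pochhammer a n * pochhammer (a + of_nat n) m) * (4^m * H / fact n)
       * (1 / (4^m * 4^m * 4^m * 4^(n - 2*m)))"
  proof -
    have q: "(27/64::complex)^m / 27^m = 1/(4^m*4^m*4^m)"
    proof -
      have "(27/64::complex)^m / 27^m = 1 / 64^m" by (simp add: power_divide)
      also have "(64::complex)^m = (4*4*4)^m" by simp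
      also have "\<dots> = 4^m*4^m*4^m" by (simp only: power_mult_distrib)
      finally show ?thesis .
    qed
    show ?thesis unfolding p1 fH by (simp add: q mult.assoc)
  qed
  also have "\<dots> = Pk / Bs * (pochhammer a n * pochhammer (a + of_nat n) m) * (4^m * H / fact n)
       * (1 / (4^m * 4^n))"
  proof -
    have "(4::complex)^m * 4^m * 4^m * 4^(n - 2*m) = 4^m * (4^(n - 2*m) * 4^m * 4^m)" by (simp add: mult_ac)
    then show ?thesis unfolding p4 by simp
  qed
  also have "\<dots> = pochhammer a n / (fact n * 4^n) * (H * pochhammer (a + of_nat n) m * Pk / Bs)"
    by (simp add: field_simps)
  finally show ?thesis unfolding H_def Pk_def Bs_def by (simp add: mult_ac)
qed

lemma sum_extend_zero:
  fixes f :: "nat \<Rightarrow> complex"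
  assumes "\<And>j. j > N \<Longrightarrow> f j = 0" "N \<le> M"
  shows "(\<Sum>j\<le>N. f j) = (\<Sum>j\<le>M. f j)"
  by (rule sum.mono_neutral_left) (use assms in auto)

lemma coeff_identity:
  fixes k :: nat and a b d :: complex
  assumes h1: "\<not> nonpos_int (3/4 + of_nat k / 2 + a/2 + b/2)"
      and h2: "\<not> nonpos_int (3/4 + of_nat k / 2 + a/2 - b/2)"
      and h3: "\<not> nonpos_int d"
      and h4: "\<not> nonpos_int (1/2 + of_nat k + a + b)"
      and h5: "\<not> nonpos_int (1/2 + of_nat k + a - b)"
      and h6: "pochhammer (u3 k a b) k * pochhammer (v3 k a b) k \<noteq> 0"
  shows "(\<Sum>m\<le>n div 2. cm k a b d m * (27/64)^m * (pochhammer (of_nat (3*m) + a) (n - 2*m) / fact (n - 2*m) / 4^(n - 2*m)))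
       = rhs_coeff k a b d n"
proof -
  define N where "N = n div 2"
  define L where "L = n - N"
  have NL: "N + L = n" "N \<le> n" unfolding L_def N_def by simp_all
  define B1 where "B1 = 3/4 + of_nat k / 2 + a/2 + b/2"
  define B2 where "B2 = 3/4 + of_nat k / 2 + a/2 - b/2"
  define A2 where "A2 = 1/2 - (of_nat L :: complex)"
  define A3 where "A3 = a + (of_nat n :: complex)"
  define w where "w = 1/4 - of_nat k / 2 + a/2 + (b/2 :: complex)"
  define q where "q = 1/4 - of_nat k / 2 + a/2 - (b/2 :: complex)"
  have nB1: "pochhammer B1 N \<noteq> 0" using nonpos_int_poch[OF h1] by (simp add: B1_def)
  have nB2: "pochhammer B2 N \<noteq> 0" using nonpos_int_poch[OF h2] by (simp add: B2_def)
  have nd: "pochhammer d N \<noteq> 0" using nonpos_int_poch[OF h3] .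
  have on: "(of_nat n :: complex) = of_nat N + of_nat L" using NL by (simp flip: of_nat_add)
  define X where "X = (\<lambda>j. pochhammer (- of_nat k) j * pochhammer (d - A3) j * pochhammer (- of_nat N) j * pochhammer A2 j
            / (fact j * pochhammer d j))"
  define Y where "Y = (\<lambda>j. (-1)^(N-j) * pochhammer (B1 - A2) (N-j) * pochhammer (B1 - A3 - of_nat k + of_nat j) (N-j)
            / (pochhammer B1 N * pochhammer B2 N))"
  define P1 where "P1 = pochhammer (1/2 + of_nat k + a + b) n"
  define P2 where "P2 = pochhammer (1/2 + of_nat k + a - b) n"
  define Pu where "Pu = pochhammer (u3 k a b) k"
  define Pv where "Pv = pochhammer (v3 k a b) k"
  define Z where "Z = (\<lambda>j. pochhammer (u3 k a b - of_nat n + of_nat j) (k - j) * pochhammer (v3 k a b - of_nat n + of_nat j) (k - j))"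
  define W where "W = pochhammer q n * pochhammer w n / (P1 * P2 * Pu * Pv)"
  have S1: "(\<Sum>m\<le>n div 2. cm k a b d m * (27/64)^m * (pochhammer (of_nat (3*m) + a) (n - 2*m) / fact (n - 2*m) / 4^(n - 2*m)))
      = pochhammer a n / (fact n * 4^n) * (\<Sum>m\<le>N. pochhammer (- of_nat N) m * pochhammer A2 m * pochhammer A3 m * pochhammer (d + of_nat k) m
            / (fact m * pochhammer B1 m * pochhammer B2 m * pochhammer d m))"
    unfolding sum_distrib_left N_def[symmetric]
  proof (intro sum.cong refl)
    fix m assume "m \<in> {..N}"
    then have "2 * m \<le> n" by (simp add: N_def)
    note ct = coeff_term[OF this, of k a b d]
    have hp: "pochhammer (- of_nat n / 2 :: complex) m * pochhammer (- of_nat n / 2 + 1/2) m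
       = pochhammer (- of_nat N) m * pochhammer A2 m"
      using poch_half_pair[of n m] by (simp add: N_def L_def A2_def)
    show "cm k a b d m * (27/64)^m * (pochhammer (of_nat (3*m) + a) (n - 2*m) / fact (n - 2*m) / 4^(n - 2*m))
      = pochhammer a n / (fact n * 4^n) * (pochhammer (- of_nat N) m * pochhammer A2 m * pochhammer A3 m * pochhammer (d + of_nat k) m
            / (fact m * pochhammer B1 m * pochhammer B2 m * pochhammer d m))"
      unfolding ct hp[symmetric] by (simp add: A3_def B1_def B2_def add.commute mult_ac)
  qed
  have S2: "(\<Sum>m\<le>N. pochhammer (- of_nat N) m * pochhammer A2 m * pochhammer A3 m * pochhammer (d + of_nat k) m
            / (fact m * pochhammer B1 m * pochhammer B2 m * pochhammer d m)) = (\<Sum>j\<le>N. X j * Y j)"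
    unfolding X_def Y_def
    by (rule sears_like[OF _ nB1 nB2 nd]) (simp add: B1_def B2_def A2_def A3_def on algebra_simps)
  have S3: "rhs_coeff k a b d n = pochhammer a n / fact n * (\<Sum>j\<le>k. X j * (W * Z j))"
  proof -
    have "rhs_coeff k a b d n = pochhammer a n * pochhammer q n * pochhammer w n / (fact n * P1 * P2)
        * (1 / (Pu * Pv) * (\<Sum>j\<le>k. X j * Z j))"
    proof -
      have Xalt: "X j = pochhammer (- of_nat n / 2) j * pochhammer (- of_nat n / 2 + 1 / 2) j * pochhammer (- of_nat k) j *
           pochhammer (- of_nat n - a + d) j / (fact j * pochhammer d j)" for j
      proof -
        have hp: "pochhammer (- of_nat n / 2 :: complex) j * pochhammer (- of_nat n / 2 + 1/2) j
           = pochhammer (- of_nat N) j * pochhammer A2 j"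
          using poch_half_pair[of n j] by (simp add: N_def L_def A2_def)
        have e: "- of_nat n - a + d = d - A3" by (simp add: A3_def)
        show ?thesis unfolding X_def e using hp by (simp add: mult_ac)
      qed
      have Qs: "Q3' k n a b d = 1 / (Pu * Pv) * (\<Sum>j\<le>k. X j * Z j)"
        unfolding Q3'_def Let_def Pu_def Pv_def atLeast0AtMost Xalt Z_def by (simp add: mult_ac)
      show ?thesis unfolding rhs_coeff_def Qs P1_def P2_def q_def w_def by (simp add: mult_ac)
    qed
    then show ?thesis unfolding W_def by (simp add: sum_distrib_left sum_divide_distrib field_simps)
  qed
  have T: "Y j / 4^n = W * Z j" if jN: "j \<le> N" and jk: "j \<le> k" for j
  proof -
    have K: "(-1)^(N-j) * pochhammer (w + of_nat k + of_nat L) (N-j) * pochhammer (1 - q - of_nat k - of_nat n + of_nat j) (N-j)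
     * pochhammer (w + of_nat k) L * pochhammer (q + of_nat k) L * pochhammer (1 - q - of_nat k) k * pochhammer (1 - w - of_nat k) k
     = pochhammer q n * pochhammer w n * pochhammer (1 - q - of_nat k - of_nat n + of_nat j) (k-j)
     * pochhammer (1 - w - of_nat k - of_nat n + of_nat j) (k-j)"
      by (rule key_identity[OF NL(1) jN jk])
    have e1: "B1 - A2 = w + of_nat k + of_nat L" by (simp add: B1_def A2_def w_def algebra_simps)
    have e2: "B1 - A3 - of_nat k + of_nat j = 1 - q - of_nat k - of_nat n + of_nat j"
      by (simp add: B1_def A3_def q_def algebra_simps)
    have e3: "u3 k a b = 1 - q - of_nat k" by (simp add: u3_def q_def algebra_simps)
    have e4: "v3 k a b = 1 - w - of_nat k" by (simp add: v3_def w_def algebra_simps)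
    have dP1: "P1 = 2^n * pochhammer (w + of_nat k) L * pochhammer B1 N"
    proof -
      have "P1 = pochhammer (2 * (w + of_nat k)) n" unfolding P1_def by (simp add: w_def algebra_simps)
      also have "\<dots> = 2^n * pochhammer (w + of_nat k) L * pochhammer (w + of_nat k + 1/2) N"
        unfolding L_def N_def by (rule poch_dup_gen)
      also have "w + of_nat k + 1/2 = B1" by (simp add: w_def B1_def algebra_simps)
      finally show ?thesis .
    qed
    have dP2: "P2 = 2^n * pochhammer (q + of_nat k) L * pochhammer B2 N"
    proof -
      have "P2 = pochhammer (2 * (q + of_nat k)) n" unfolding P2_def by (simp add: q_def algebra_simps)
      also have "\<dots> = 2^n * pochhammer (q + of_nat k) L * pochhammer (q + of_nat k + 1/2) N"
        unfolding L_def N_def by (rule poch_dup_gen)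
      also have "q + of_nat k + 1/2 = B2" by (simp add: q_def B2_def algebra_simps)
      finally show ?thesis .
    qed
    have nP1: "P1 \<noteq> 0" using nonpos_int_poch[OF h4] by (simp add: P1_def)
    have nP2: "P2 \<noteq> 0" using nonpos_int_poch[OF h5] by (simp add: P2_def)
    have nwk: "pochhammer (w + of_nat k) L \<noteq> 0" using nP1 dP1 by auto
    have nqk: "pochhammer (q + of_nat k) L \<noteq> 0" using nP2 dP2 by auto
    have nPu: "Pu \<noteq> 0" and nPv: "Pv \<noteq> 0" using h6 by (auto simp: Pu_def Pv_def)
    have Pu': "Pu = pochhammer (1 - q - of_nat k) k" unfolding Pu_def e3 ..
    have Pv': "Pv = pochhammer (1 - w - of_nat k) k" unfolding Pv_def e4 ..
    have Z': "Z j = pochhammer (1 - q - of_nat k - of_nat n + of_nat j) (k-j) * pochhammer (1 - w - of_nat k - of_nat n + of_nat j) (k-j)"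
      unfolding Z_def e3 e4 by (simp add: algebra_simps)
    have four: "(4::complex)^n = 2^n * 2^n" by (simp flip: power_mult_distrib)
    show ?thesis
      unfolding Y_def W_def Z' e1 e2 dP1 dP2 four
      using K nB1 nB2 nwk nqk nPu nPv unfolding Pu' Pv'
      by (simp add: field_simps)
  qed
  have zN: "X j = 0" if "j > N" for j
    using that by (simp add: X_def pochhammer_of_nat_eq_0_lemma)
  have zk: "X j = 0" if "j > k" for j
    using that by (simp add: X_def pochhammer_of_nat_eq_0_lemma)
  have "(\<Sum>j\<le>N. X j * Y j) / 4^n = (\<Sum>j\<le>N. X j * (W * Z j))"
    unfolding sum_divide_distrib
  proof (intro sum.cong refl)
    fix j assume "j \<in> {..N}"
    then show "X j * Y j / 4^n = X j * (W * Z j)"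
      using T[of j] zk[of j] by (cases "j \<le> k") (auto simp flip: times_divide_eq_right)
  qed
  also have "\<dots> = (\<Sum>j\<le>N + k. X j * (W * Z j))"
    by (rule sum_extend_zero) (auto simp: zN)
  also have "\<dots> = (\<Sum>j\<le>k. X j * (W * Z j))"
    by (rule sum_extend_zero[symmetric]) (auto simp: zk)
  finally have F: "(\<Sum>j\<le>N. X j * Y j) / 4^n = (\<Sum>j\<le>k. X j * (W * Z j))" .
  show ?thesis unfolding S1 S2 S3 F[symmetric] by (simp add: field_simps)
qed


lemma poch_nonneg0: "0 \<le> (x::real) \<Longrightarrow> 0 \<le> pochhammer x n"
  by (induction n) (auto simp: pochhammer_Suc)

lemma norm_poch_le: "norm (pochhammer (z::complex) l) \<le> pochhammer (norm z) l"
proof (induction l)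
  case 0 then show ?case by simp
next
  case (Suc l)
  have "norm (pochhammer z (Suc l)) = norm (pochhammer z l) * norm (z + of_nat l)"
    by (simp add: pochhammer_Suc norm_mult)
  also have "\<dots> \<le> pochhammer (norm z) l * (norm z + of_nat l)"
  proof (rule mult_mono)
    show "norm (z + of_nat l) \<le> norm z + of_nat l"
      using norm_triangle_ineq[of z "of_nat l"] by simp
  qed (use Suc in \<open>auto intro: poch_nonneg0\<close>)
  also have "\<dots> = pochhammer (norm z) (Suc l)" by (simp add: pochhammer_Suc)
  finally show ?case .
qed

lemma poch_mono_real: "0 \<le> x \<Longrightarrow> x \<le> y \<Longrightarrow> pochhammer (x::real) l \<le> pochhammer y l"
proof (induction l)
  case 0 then show ?case by simp
next
  case (Suc l)
  have "pochhammer x l * (x + of_nat l) \<le> pochhammer y l * (y + of_nat l)"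
    by (rule mult_mono) (use Suc in \<open>simp_all add: poch_nonneg0\<close>)
  then show ?case by (simp add: pochhammer_Suc)
qed

lemma binom_series_real:
  fixes c s :: real
  assumes "0 \<le> s" "s < 1"
  shows "(\<lambda>l. pochhammer c l / fact l * s^l) sums (1 - s) powr (-c)"
proof -
  have "(\<lambda>l. ((-c) gchoose l) * (-s)^l) sums (1 + -s) powr (-c)"
    by (rule gen_binomial_real) (use assms in auto)
  moreover have "((-c) gchoose l) * (-s)^l = pochhammer c l / fact l * s^l" for l
  proof -
    have "((-c) gchoose l) * (-s)^l = ((-1)^l * (-1)^l) * (pochhammer c l / fact l * s^l)"
      unfolding gbinomial_pochhammer power_minus[of s] by simp
    also have "((-1::real)^l * (-1)^l) = 1" by (simp flip: power_mult_distrib)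
    finally show ?thesis by simp
  qed
  ultimately show ?thesis by simp
qed

lemma binom_series_complex:
  fixes c y :: complex
  assumes "norm y < 1"
  shows "(\<lambda>l. pochhammer c l / fact l * y^l) sums (1 - y) powr (-c)"
proof -
  have "(\<lambda>l. ((-c) gchoose l) * (-y)^l) sums (1 + -y) powr (-c)"
    by (rule gen_binomial_complex) (use assms in auto)
  moreover have "((-c) gchoose l) * (-y)^l = pochhammer c l / fact l * y^l" for l
  proof -
    have "((-c) gchoose l) * (-y)^l = ((-1)^l * (-1)^l) * (pochhammer c l / fact l * y^l)"
      unfolding gbinomial_pochhammer power_minus[of y] by simp
    also have "((-1::complex)^l * (-1)^l) = 1" by (simp flip: power_mult_distrib)
    finally show ?thesis by simp
  qed
  ultimately show ?thesis by simp
qed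

lemma norm_add_nat_le: "norm (A + of_nat m :: complex) \<le> (norm A + 1) * (of_nat m + 1)"
proof -
  have "norm (A + of_nat m) \<le> norm A + of_nat m" using norm_triangle_ineq[of A "of_nat m"] by simp
  also have "\<dots> \<le> (norm A + 1) * (of_nat m + 1)" by (simp add: algebra_simps)
  finally show ?thesis .
qed

lemma norm_add_nat_ge: "2 * norm B + 1 \<le> of_nat m \<Longrightarrow> (of_nat m + 1) / 2 \<le> norm (B + of_nat m :: complex)"
proof -
  assume m: "2 * norm B + 1 \<le> of_nat m"
  have "of_nat m - norm B \<le> norm (B + of_nat m)"
    using norm_triangle_ineq2[of "of_nat m :: complex" "-B"] by (simp add: add.commute)
  moreover have "(of_nat m + 1) / 2 \<le> of_nat m - norm B" using m by simp
  ultimately show ?thesis by linarith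
qed

lemma cm_Suc:
  assumes "\<not> nonpos_int (3/4 + of_nat k / 2 + a/2 + b/2)" "\<not> nonpos_int (3/4 + of_nat k / 2 + a/2 - b/2)" "\<not> nonpos_int d"
  shows "cm k a b d (Suc m) = cm k a b d m *
    ((a/3 + of_nat m) * (1/3 + a/3 + of_nat m) * (2/3 + a/3 + of_nat m) * (of_nat k + d + of_nat m)
     / ((3/4 + of_nat k / 2 + a/2 + b/2 + of_nat m) * (3/4 + of_nat k / 2 + a/2 - b/2 + of_nat m) * (d + of_nat m) * (of_nat m + 1)))"
proof -
  have n1: "pochhammer (3/4 + of_nat k / 2 + a/2 + b/2) (Suc m) \<noteq> 0" using nonpos_int_poch[OF assms(1)] .
  have n2: "pochhammer (3/4 + of_nat k / 2 + a/2 - b/2) (Suc m) \<noteq> 0" using nonpos_int_poch[OF assms(2)] .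
  have n3: "pochhammer d (Suc m) \<noteq> 0" using nonpos_int_poch[OF assms(3)] .
  have gen: "\<And>p1 p2 p3 p4 x1 x2 x3 x4 q1 q2 q3 y1 y2 y3 f z :: complex.
     (p1*x1)*(p2*x2)*(p3*x3)*(p4*x4)/((q1*y1)*(q2*y2)*(q3*y3)*(z*f))
       = p1*p2*p3*p4/(q1*q2*q3*f) * (x1*x2*x3*x4/(y1*y2*y3*z))"
    by (simp add: divide_inverse inverse_mult_distrib mult_ac)
  show ?thesis unfolding cm_def pochhammer_Suc fact_Suc of_nat_Suc gen
    by (simp add: add.commute)

qed

lemma cm_summable:
  assumes "\<not> nonpos_int (3/4 + of_nat k / 2 + a/2 + b/2)" "\<not> nonpos_int (3/4 + of_nat k / 2 + a/2 - b/2)" "\<not> nonpos_int d"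
  shows "\<exists>\<rho>0>0. \<forall>\<rho>. 0 \<le> \<rho> \<longrightarrow> \<rho> \<le> \<rho>0 \<longrightarrow> summable (\<lambda>m. norm (cm k a b d m) * \<rho>^m)"
proof -
  define A1 where "A1 = a/3"
  define A2 where "A2 = 1/3 + a/3"
  define A3 where "A3 = 2/3 + a/3"
  define A4 where "A4 = of_nat k + d"
  define B1 where "B1 = 3/4 + of_nat k / 2 + a/2 + b/2"
  define B2 where "B2 = 3/4 + of_nat k / 2 + a/2 - b/2"
  define K where "K = (norm A1 + 1) * (norm A2 + 1) * (norm A3 + 1) * (norm A4 + 1)"
  have K1: "K \<ge> 1"
  proof -
    have "1 * 1 * 1 * 1 \<le> K" unfolding K_def by (intro mult_mono) auto
    then show ?thesis by simp
  qed
  define M0 where "M0 = nat (ceiling (2 * (norm B1 + norm B2 + norm d))) + 1"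
  define R where "R = (\<lambda>m::nat. (A1 + of_nat m) * (A2 + of_nat m) * (A3 + of_nat m) * (A4 + of_nat m)
     / ((B1 + of_nat m) * (B2 + of_nat m) * (d + of_nat m) * (of_nat m + 1)))"
  have cmS: "cm k a b d (Suc m) = cm k a b d m * R m" for m
    using cm_Suc[OF assms, of m] by (simp add: R_def A1_def A2_def A3_def A4_def B1_def B2_def add.assoc)
  have Rb: "norm (R m) \<le> 8 * K" if m: "m \<ge> M0" for m
  proof -
    define x where "x = (of_nat m + 1 :: real)"
    have xpos: "x > 0" by (simp add: x_def)
    have mB: "2 * norm B + 1 \<le> of_nat m" if "norm B \<le> norm B1 + norm B2 + norm d" for B :: complex
    proof -
      have "2 * (norm B1 + norm B2 + norm d) \<le> of_nat (nat (ceiling (2 * (norm B1 + norm B2 + norm d))))"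
        by linarith
      moreover have "of_nat M0 \<le> (of_nat m :: real)" using m by simp
      ultimately have "1 + real_of_int \<lceil>2 * cmod B1 + 2 * cmod B2 + 2 * cmod d\<rceil> \<le> real m" unfolding M0_def by simp
      moreover have "2 * cmod B1 + 2 * cmod B2 + 2 * cmod d \<le> real_of_int \<lceil>2 * cmod B1 + 2 * cmod B2 + 2 * cmod d\<rceil>"
        by (rule le_of_int_ceiling)
      ultimately show ?thesis using that by linarith
    qed
    have g1: "x / 2 \<le> norm (B1 + of_nat m)" unfolding x_def by (rule norm_add_nat_ge, rule mB) simp
    have g2: "x / 2 \<le> norm (B2 + of_nat m)" unfolding x_def by (rule norm_add_nat_ge, rule mB) simp
    have g3: "x / 2 \<le> norm (d + of_nat m)" unfolding x_def by (rule norm_add_nat_ge, rule mB) simp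
    have num: "norm ((A1 + of_nat m) * (A2 + of_nat m) * (A3 + of_nat m) * (A4 + of_nat m)) \<le> K * x^4"
    proof -
      have "norm ((A1 + of_nat m) * (A2 + of_nat m) * (A3 + of_nat m) * (A4 + of_nat m))
         = norm (A1 + of_nat m) * norm (A2 + of_nat m) * norm (A3 + of_nat m) * norm (A4 + of_nat m)"
        by (simp add: norm_mult)
      also have "\<dots> \<le> ((norm A1 + 1) * x) * ((norm A2 + 1) * x) * ((norm A3 + 1) * x) * ((norm A4 + 1) * x)"
        unfolding x_def
        by (intro mult_mono norm_add_nat_le) (auto intro!: mult_nonneg_nonneg)
      also have "\<dots> = K * x^4" by (simp add: K_def power4_eq_xxxx mult_ac)
      finally show ?thesis .
    qed
    have den: "(x/2)^3 * x \<le> norm ((B1 + of_nat m) * (B2 + of_nat m) * (d + of_nat m) * (of_nat m + 1))"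
    proof -
      have "(x/2)^3 * x = (x/2) * (x/2) * (x/2) * x" by (simp add: power3_eq_cube)
      also have "\<dots> \<le> norm (B1 + of_nat m) * norm (B2 + of_nat m) * norm (d + of_nat m) * norm (of_nat m + 1 :: complex)"
      proof -
        have "norm (of_nat m + 1 :: complex) = x" unfolding x_def
          by (metis norm_of_nat of_nat_Suc add.commute)
        then show ?thesis using xpos g1 g2 g3
          by (intro mult_mono) (auto intro!: mult_nonneg_nonneg)
      qed
      also have "\<dots> = norm ((B1 + of_nat m) * (B2 + of_nat m) * (d + of_nat m) * (of_nat m + 1))"
        by (simp add: norm_mult)
      finally show ?thesis .
    qed
    have dpos: "0 < (x/2)^3 * x" using xpos by simp
    have "norm (R m) = norm ((A1 + of_nat m) * (A2 + of_nat m) * (A3 + of_nat m) * (A4 + of_nat m))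
         / norm ((B1 + of_nat m) * (B2 + of_nat m) * (d + of_nat m) * (of_nat m + 1))"
      unfolding R_def by (simp add: norm_divide)
    also have "\<dots> \<le> (K * x^4) / ((x/2)^3 * x)"
      by (rule frac_le) (use num den dpos K1 in auto)
    also have "\<dots> = 8 * K" using xpos by (simp add: field_simps power4_eq_xxxx power3_eq_cube)
    finally show ?thesis .
  qed
  define \<rho>0 where "\<rho>0 = 1 / (16 * K)"
  have \<rho>0: "\<rho>0 > 0" using K1 by (simp add: \<rho>0_def)
  show ?thesis
  proof (intro exI[of _ \<rho>0] conjI allI impI \<rho>0)
    fix \<rho> :: real assume r0: "0 \<le> \<rho>" and r1: "\<rho> \<le> \<rho>0"
    show "summable (\<lambda>m. norm (cm k a b d m) * \<rho>^m)"
    proof (rule summable_ratio_test[of "1/2" M0])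
      fix m assume "m \<ge> M0"
      then have Rm: "norm (R m) \<le> 8 * K" by (rule Rb)
      have "8 * K * \<rho> \<le> 1/2" using r1 K1 r0 by (simp add: \<rho>0_def field_simps)
      have "norm (norm (cm k a b d (Suc m)) * \<rho>^Suc m) = norm (cm k a b d m) * \<rho>^m * (norm (R m) * \<rho>)"
        using r0 by (simp add: cmS norm_mult mult_ac)
      also have "\<dots> \<le> norm (cm k a b d m) * \<rho>^m * (1/2)"
      proof (rule mult_left_mono)
        show "norm (R m) * \<rho> \<le> 1/2"
          using mult_right_mono[OF Rm r0] \<open>8 * K * \<rho> \<le> 1/2\<close> by linarith
      qed (use r0 in simp)
      also have "\<dots> = 1/2 * norm (norm (cm k a b d m) * \<rho>^m)" using r0 by simp
      finally show "norm (norm (cm k a b d (Suc m)) * \<rho>^Suc m) \<le> 1/2 * norm (norm (cm k a b d m) * \<rho>^m)" .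
    qed simp
  qed
qed


lemma hyp_term_cm:
  "hyp_term [a/3, 1/3 + a/3, 2/3 + a/3, of_nat k + d]
     [3/4 + of_nat k / 2 + a/2 + b/2, 3/4 + of_nat k / 2 + a/2 - b/2, d] z m = cm k a b d m * z^m"
  unfolding hyp_term_def cm_def by (simp add: mult.assoc)

lemma analytic_main:
  fixes k :: nat and a b d x :: complex and \<rho>0 :: real
  assumes h1: "\<not> nonpos_int (3/4 + of_nat k / 2 + a/2 + b/2)"
      and h2: "\<not> nonpos_int (3/4 + of_nat k / 2 + a/2 - b/2)"
      and h3: "\<not> nonpos_int d"
      and h4: "\<not> nonpos_int (1/2 + of_nat k + a + b)"
      and h5: "\<not> nonpos_int (1/2 + of_nat k + a - b)"
      and h6: "pochhammer (u3 k a b) k * pochhammer (v3 k a b) k \<noteq> 0"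
      and sm: "\<And>\<rho>. 0 \<le> \<rho> \<Longrightarrow> \<rho> \<le> \<rho>0 \<Longrightarrow> summable (\<lambda>m. norm (cm k a b d m) * \<rho>^m)"
      and x1: "norm x < 1" and x2: "norm x < \<rho>0"
  shows "summable (\<lambda>m. cm k a b d m * (27 * x^2 / (4 - x)^3)^m) \<and>
      summable (\<lambda>n. rhs_coeff k a b d n * x ^ n) \<and>
      (\<Sum>m. cm k a b d m * (27 * x^2 / (4 - x)^3)^m) = (1 - x/4) powr a * (\<Sum>n. rhs_coeff k a b d n * x ^ n)"
proof -
  define c where "c = cm k a b d"
  define s where "s = norm x / 4"
  define t where "t = 1 - x / 4"
  define z where "z = 27 * x^2 / (4 - x)^3"
  define \<rho> where "\<rho> = 27 * norm x ^ 2 / (64 * (1 - s)^3)"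
  have s0: "0 \<le> s" and s1: "s < 1/4" using x1 by (auto simp: s_def)
  have t0: "t \<noteq> 0"
  proof
    assume "t = 0"
    then have "x = 4" by (simp add: t_def field_simps)
    then show False using x1 by simp
  qed
  have \<rho>0: "0 \<le> \<rho>" using s1 by (simp add: \<rho>_def)
  have \<rho>1: "\<rho> \<le> \<rho>0"
  proof -
    have "(27/64::real) \<le> (1 - s)^3"
    proof -
      have "(3/4::real)^3 \<le> (1 - s)^3" by (rule power_mono) (use s1 in auto)
      then show ?thesis by (simp add: power3_eq_cube)
    qed
    then have "\<rho> \<le> 27 * norm x ^ 2 / (64 * (27/64))"
      unfolding \<rho>_def by (intro divide_left_mono) (use s1 in auto)
    also have "\<dots> = norm x ^ 2" by simp
    also have "\<dots> \<le> norm x" using x1 by (simp add: power2_eq_square mult_left_le_one_le)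
    finally show ?thesis using x2 by simp
  qed
  have smr: "summable (\<lambda>m. norm (c m) * \<rho>^m)" unfolding c_def by (rule sm[OF \<rho>0 \<rho>1])
  have nz: "norm z \<le> \<rho>"
  proof -
    have "4 * (1 - s) \<le> norm (4 - x)"
      using norm_triangle_ineq2[of 4 x] by (simp add: s_def)
    then have "(4 * (1 - s))^3 \<le> norm (4 - x)^3" by (rule power_mono) (use s1 in auto)
    moreover have "(4 * (1 - s))^3 = 64 * (1 - s)^3" by (simp only: power_mult_distrib) simp
    ultimately have "64 * (1 - s)^3 \<le> norm (4 - x)^3" by simp
    moreover have "0 < 64 * (1 - s)^3" using s1 by simp
    ultimately have "0 < norm (4 - x)^3 * (64 * (1 - s)^3)" "64 * (1 - s)^3 \<le> norm (4 - x)^3"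
      by (auto intro!: mult_pos_pos)
    then have "27 * norm x ^ 2 / norm (4 - x)^3 \<le> 27 * norm x ^ 2 / (64 * (1 - s)^3)"
      by (intro divide_left_mono) auto
    then show ?thesis by (simp add: z_def \<rho>_def norm_divide norm_mult norm_power)
  qed
  have sumL: "summable (\<lambda>m. norm (c m * z^m))"
  proof (rule summable_comparison_test[OF _ smr])
    show "\<exists>N. \<forall>n\<ge>N. norm (norm (c n * z^n)) \<le> norm (c n) * \<rho>^n"
      using nz by (auto simp: norm_mult norm_power intro!: mult_left_mono power_mono)
  qed
  define F where "F = (\<lambda>(m::nat, l::nat). c m * (27/64)^m * x^(2*m) * (pochhammer (of_nat (3*m) + a) l / fact l * (x/4)^l))"
  define rowF where "rowF = (\<lambda>m::nat. c m * (27/64)^m * x^(2*m) * t powr (-(of_nat (3*m) + a)))"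
  define G where "G = (\<lambda>(m::nat, l::nat). norm (c m) * (27/64)^m * norm x^(2*m) * (pochhammer (of_nat (3*m) + norm a) l / fact l * s^l))"
  define rowG where "rowG = (\<lambda>m::nat. norm (c m) * \<rho>^m * (1 - s) powr (- norm a))"
  have rowF_sums: "(\<lambda>l. F (m, l)) sums rowF m" for m
  proof -
    have "(\<lambda>l. pochhammer (of_nat (3*m) + a) l / fact l * (x/4)^l) sums (1 - x/4) powr (-(of_nat (3*m) + a))"
      by (rule binom_series_complex) (use x1 in \<open>simp add: norm_divide\<close>)
    from sums_mult[OF this, of "c m * (27/64)^m * x^(2*m)"]
    show ?thesis by (simp add: F_def rowF_def t_def)
  qed
  have rowG_sums: "(\<lambda>l. G (m, l)) sums rowG m" for m
  proof -
    have "(\<lambda>l. pochhammer (of_nat (3*m) + norm a) l / fact l * s^l) sums (1 - s) powr (-(of_nat (3*m) + norm a))"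
      by (rule binom_series_real) (use s0 s1 in auto)
    from sums_mult[OF this, of "norm (c m) * (27/64)^m * norm x^(2*m)"]
    have "(\<lambda>l. G (m, l)) sums (norm (c m) * (27/64)^m * norm x^(2*m) * (1 - s) powr (-(of_nat (3*m) + norm a)))"
      by (simp add: G_def)
    moreover have "norm (c m) * (27/64)^m * norm x^(2*m) * (1 - s) powr (-(of_nat (3*m) + norm a)) = rowG m"
    proof -
      have sp: "0 < 1 - s" using s1 by simp
      have "(1 - s) powr (-(of_nat (3*m) + norm a)) = (1 - s) powr (- norm a) * inverse ((1 - s)^(3*m))"
      proof -
        have "-(of_nat (3*m) + norm a) = - norm a + - real (3*m)" by simp
        then have "(1 - s) powr (-(of_nat (3*m) + norm a)) = (1 - s) powr (- norm a) * (1 - s) powr (- real (3*m))"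
          by (simp only: powr_add)
        also have "(1 - s) powr (- real (3*m)) = inverse ((1 - s)^(3*m))"
          using sp by (simp only: powr_minus powr_realpow)
        finally show ?thesis .
      qed
      moreover have "(27/64)^m * norm x^(2*m) * inverse ((1 - s)^(3*m)) = \<rho>^m"
        using sp by (simp add: \<rho>_def power_divide power_mult power_mult_distrib field_simps flip: power_mult)
      ultimately show ?thesis unfolding rowG_def by (simp add: mult_ac)
    qed
    ultimately show ?thesis by simp
  qed
  have FG: "norm (F (m, l)) \<le> G (m, l)" for m l
  proof -
    have "norm (pochhammer (of_nat (3*m) + a) l) \<le> pochhammer (norm (of_nat (3*m) + a)) l"
      by (rule norm_poch_le)
    also have "\<dots> \<le> pochhammer (of_nat (3*m) + norm a) l"
      by (rule poch_mono_real) (auto intro: norm_triangle_le simp: norm_triangle_ineq)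
    finally have P: "norm (pochhammer (of_nat (3*m) + a) l) \<le> pochhammer (of_nat (3*m) + norm a) l" .
    have "norm (F (m, l)) = norm (c m) * (27/64)^m * norm x^(2*m) * (norm (pochhammer (of_nat (3*m) + a) l) / fact l * s^l)"
      by (simp add: F_def norm_mult norm_divide norm_power s_def power_divide)
    also have "\<dots> \<le> G (m, l)"
      unfolding G_def using P s0
      by (auto intro!: mult_left_mono mult_right_mono divide_right_mono)
    finally show ?thesis .
  qed
  have G0: "0 \<le> G (m, l)" for m l
    unfolding G_def using s0 by (auto intro!: mult_nonneg_nonneg divide_nonneg_pos poch_nonneg0)
  have rowG0: "0 \<le> rowG m" for m
    unfolding rowG_def using \<rho>0 by auto
  have G_has: "((\<lambda>l. G (m, l)) has_sum rowG m) UNIV" for m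
  proof (rule norm_summable_imp_has_sum[OF _ rowG_sums])
    have "summable (\<lambda>l. G (m, l))" using rowG_sums[of m] by (rule sums_summable)
    then show "summable (\<lambda>l. norm (G (m, l)))" using G0 by simp
  qed
  have G_summ: "(\<lambda>l. G (m, l)) summable_on UNIV" for m
    using G_has by (rule has_sum_imp_summable)
  have rowG_summ: "rowG summable_on UNIV"
  proof (rule norm_summable_imp_summable_on)
    have "summable (\<lambda>m. norm (c m) * \<rho>^m * (1 - s) powr (- norm a))"
      by (rule summable_mult2[OF smr])
    then show "summable (\<lambda>m. norm (rowG m))" using rowG0 by (simp add: rowG_def)
  qed
  have F_row_abs: "(\<lambda>l. norm (F (m, l))) summable_on UNIV" for m
    by (rule Infinite_Sum.abs_summable_on_comparison_test'[OF G_summ]) (rule FG)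
  have F_abs: "(\<lambda>p. norm (F p)) summable_on UNIV"
  proof -
    have "(\<lambda>p. norm (F p)) summable_on Sigma UNIV (\<lambda>_. UNIV)"
    proof (subst Infinite_Sum.abs_summable_on_Sigma_iff, intro conjI ballI)
      fix m :: nat show "(\<lambda>l. norm (F (m, l))) summable_on UNIV" using F_row_abs[of m] by simp
    next
      show "(\<lambda>m. norm (infsum (\<lambda>l. norm (F (m, l))) UNIV)) summable_on UNIV"
      proof (rule Infinite_Sum.abs_summable_on_comparison_test'[OF rowG_summ])
        fix m :: nat
        have "infsum (\<lambda>l. norm (F (m, l))) UNIV \<le> infsum (\<lambda>l. G (m, l)) UNIV"
          by (rule infsum_mono[OF F_row_abs G_summ]) (rule FG)
        also have "\<dots> = rowG m" by (rule infsumI[OF G_has])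
        finally show "norm (infsum (\<lambda>l. norm (F (m, l))) UNIV) \<le> rowG m"
          by (simp add: infsum_nonneg)
      qed
    qed
    then show ?thesis by simp
  qed
  have F_summ: "F summable_on UNIV" by (rule abs_summable_summable[OF F_abs])
  define S where "S = infsum F UNIV"
  have F_has: "(F has_sum S) UNIV" unfolding S_def using F_summ by simp
  have F_row_has: "((\<lambda>l. F (m, l)) has_sum rowF m) UNIV" for m
  proof (rule norm_summable_imp_has_sum[OF _ rowF_sums])
    have "summable (\<lambda>l. G (m, l))" using rowG_sums[of m] by (rule sums_summable)
    then show "summable (\<lambda>l. norm (F (m, l)))"
      by (rule summable_comparison_test[rotated]) (use FG in auto)
  qed
  have rowF_has: "(rowF has_sum S) UNIV"
  proof (rule has_sum_Sigma'[where B = "\<lambda>_. UNIV"])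
    show "(F has_sum S) (UNIV \<times> UNIV)" using F_has by simp
    show "\<And>m. m \<in> UNIV \<Longrightarrow> ((\<lambda>l. F (m, l)) has_sum rowF m) UNIV" by (rule F_row_has)
  qed
  \<comment> \<open>summing by total degree\<close>
  define Sig where "Sig = Sigma (UNIV :: nat set) (\<lambda>n. {..n div 2})"
  define ii where "ii = (\<lambda>(n::nat, m::nat). (m, n - 2*m))"
  have inj: "inj_on ii Sig"
    unfolding inj_on_def Sig_def ii_def by auto
  have img: "ii ` Sig = UNIV"
  proof -
    have "(m, l) \<in> ii ` Sig" for m l
    proof
      show "(m, l) = ii (2*m + l, m)" by (simp add: ii_def)
      show "(2*m + l, m) \<in> Sig" by (simp add: Sig_def)
    qed
    then show ?thesis by auto
  qed
  have Fii: "((F \<circ> ii) has_sum S) Sig"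
    using F_has unfolding img[symmetric] by (subst (asm) has_sum_reindex[OF inj])
  define T where "T = (\<lambda>n. \<Sum>m\<le>n div 2. F (m, n - 2*m))"
  have T_has: "(T has_sum S) UNIV"
  proof (rule has_sum_Sigma'[where B = "\<lambda>n. {..n div 2}"])
    show "((F \<circ> ii) has_sum S) (Sigma UNIV (\<lambda>n. {..n div 2}))" using Fii by (simp add: Sig_def)
    fix n :: nat
    show "((\<lambda>m. (F \<circ> ii) (n, m)) has_sum T n) {..n div 2}"
      unfolding T_def using has_sum_finite[of "{..n div 2}" "\<lambda>m. (F \<circ> ii) (n, m)"]
      by (simp add: ii_def)
  qed
  have T_eq: "T n = rhs_coeff k a b d n * x^n" for n
  proof -
    have "T n = (\<Sum>m\<le>n div 2. cm k a b d m * (27/64)^m * (pochhammer (of_nat (3*m) + a) (n - 2*m) / fact (n - 2*m) / 4^(n - 2*m))) * x^n"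
      unfolding T_def sum_distrib_right
    proof (intro sum.cong refl)
      fix m assume "m \<in> {..n div 2}"
      then have mn: "2*m \<le> n" by auto
      have xx: "x^(2*m) * (x/4)^(n - 2*m) = x^n / 4^(n - 2*m)"
      proof -
        have "x^(2*m) * (x/4)^(n - 2*m) = x^(2*m + (n - 2*m)) / 4^(n - 2*m)"
          by (simp add: power_add power_divide)
        also have "2*m + (n - 2*m) = n" using mn by simp
        finally show ?thesis .
      qed
      have "F (m, n - 2*m) = c m * (27/64)^m * (pochhammer (of_nat (3*m) + a) (n - 2*m) / fact (n - 2*m)) * (x^(2*m) * (x/4)^(n - 2*m))"
        by (simp add: F_def mult_ac)
      then show "F (m, n - 2*m) = cm k a b d m * (27/64)^m * (pochhammer (of_nat (3*m) + a) (n - 2*m) / fact (n - 2*m) / 4^(n - 2*m)) * x^n"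
        unfolding xx c_def by (simp add: field_simps)
    qed
    also have "\<dots> = rhs_coeff k a b d n * x^n"
      by (simp only: coeff_identity[OF h1 h2 h3 h4 h5 h6])
    finally show ?thesis .
  qed
  have R_sums: "(\<lambda>n. rhs_coeff k a b d n * x^n) sums S"
  proof -
    have "T = (\<lambda>n. rhs_coeff k a b d n * x^n)" using T_eq by (intro ext) simp
    then show ?thesis using has_sum_imp_sums[OF T_has] by simp
  qed
  have L_eq: "c m * z^m = t powr a * rowF m" for m
  proof -
    have p: "t powr a * t powr (-(of_nat (3*m) + a)) = inverse (t^(3*m))"
    proof -
      have "t powr a * t powr (-(of_nat (3*m) + a)) = t powr (a + -(of_nat (3*m) + a))"
        by (simp only: powr_add)
      also have "a + -(of_nat (3*m) + a) = - of_nat (3*m)" by simp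
      also have "t powr (- of_nat (3*m)) = inverse (t powr of_nat (3*m))" by (rule powr_minus)
      also have "t powr of_nat (3*m) = t^(3*m)" using t0 by (rule powr_nat'[of t "3*m", OF disjI1])
      finally show ?thesis .
    qed
    have zz: "z^m = (27/64)^m * x^(2*m) * inverse (t^(3*m))"
    proof -
      have "4 - x = 4 * t" by (simp add: t_def algebra_simps)
      then have "(4 - x)^3 = 64 * t^3" by (simp add: power_mult_distrib)
      then have "z = 27/64 * x^2 * inverse (t^3)" unfolding z_def using t0 by (simp add: field_simps)
      then have "z^m = (27/64)^m * (x^2)^m * (inverse (t^3))^m" by (simp only: power_mult_distrib)
      also have "(x^2)^m = x^(2*m)" by (simp add: power_mult)
      also have "(inverse (t^3))^m = inverse (t^(3*m))" by (simp add: power_inverse power_mult)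
      finally show ?thesis .
    qed
    show ?thesis unfolding rowF_def zz using p by (simp add: mult_ac flip: p)
  qed
  have L_sums: "(\<lambda>m. c m * z^m) sums (t powr a * S)"
    using sums_mult[OF has_sum_imp_sums[OF rowF_has], of "t powr a"] by (simp add: L_eq)
  show ?thesis
    using L_sums R_sums unfolding c_def z_def t_def
    by (auto simp: sums_iff)
qed


theorem theorem6:
  fixes k :: nat and a b d :: complex
  assumes "\<not> nonpos_int (3/4 + of_nat k / 2 + a/2 + b/2)"
      and "\<not> nonpos_int (3/4 + of_nat k / 2 + a/2 - b/2)"
      and "\<not> nonpos_int d"
      and "\<not> nonpos_int (1/2 + of_nat k + a + b)"
      and "\<not> nonpos_int (1/2 + of_nat k + a - b)"
      and "pochhammer (u3 k a b) k * pochhammer (v3 k a b) k \<noteq> 0"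
  shows "\<exists>r>0. \<forall>x::complex. norm x < r \<longrightarrow>
     (let as = [a/3, 1/3 + a/3, 2/3 + a/3, of_nat k + d];
          bs = [3/4 + of_nat k / 2 + a/2 + b/2, 3/4 + of_nat k / 2 + a/2 - b/2, d];
          z = 27 * x^2 / (4 - x)^3 in
      summable (hyp_term as bs z) \<and>
      summable (\<lambda>n. rhs_coeff k a b d n * x ^ n) \<and>
      hypF as bs z = (1 - x/4) powr a * (\<Sum>n. rhs_coeff k a b d n * x ^ n))"
proof -
  obtain \<rho>0 where \<rho>0: "\<rho>0 > 0" and sm: "\<And>\<rho>. 0 \<le> \<rho> \<Longrightarrow> \<rho> \<le> \<rho>0 \<Longrightarrow> summable (\<lambda>m. norm (cm k a b d m) * \<rho>^m)"
    using cm_summable[OF assms(1-3)] by blast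
  show ?thesis
  proof (intro exI[of _ "min 1 \<rho>0"] conjI allI impI)
    show "min 1 \<rho>0 > 0" using \<rho>0 by simp
    fix x :: complex assume "norm x < min 1 \<rho>0"
    then have x1: "norm x < 1" and x2: "norm x < \<rho>0" by auto
    note M = analytic_main[OF assms sm x1 x2]
    have ht: "hyp_term [a/3, 1/3 + a/3, 2/3 + a/3, of_nat k + d]
     [3/4 + of_nat k / 2 + a/2 + b/2, 3/4 + of_nat k / 2 + a/2 - b/2, d] (27 * x^2 / (4 - x)^3)
       = (\<lambda>m. cm k a b d m * (27 * x^2 / (4 - x)^3)^m)"
      by (intro ext) (rule hyp_term_cm)
    show "let as = [a/3, 1/3 + a/3, 2/3 + a/3, of_nat k + d];
          bs = [3/4 + of_nat k / 2 + a/2 + b/2, 3/4 + of_nat k / 2 + a/2 - b/2, d];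
          z = 27 * x^2 / (4 - x)^3 in
      summable (hyp_term as bs z) \<and>
      summable (\<lambda>n. rhs_coeff k a b d n * x ^ n) \<and>
      hypF as bs z = (1 - x/4) powr a * (\<Sum>n. rhs_coeff k a b d n * x ^ n)"
      unfolding Let_def hypF_def ht using M by simp
  qed
qed


end
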